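(* Let $\lambda\neq0$ and $x$ be fixed, and let \[ F=F(t;x,\lambda)=\frac{2\lambda}{2\lambda+\log(1+\lambda t)}\Bigl(1+\lambda^{-1}\log(1+\lambda t)\Bigr)^{x}, \] considered for $t$ in a neighborhood of $0$ (or as a formal power series in $t$). Then for every integer $N\ge1$, $F$ satisfies the linear differential equation \[ \frac{d^N F}{dt^N}=\lambda^{N}(1+\lambda t)^{-N}\left(\sum_{r=1}^{N}\sum_{i=0}^{r}a^{(\lambda)}_{i,r-i}(N,x)\,\bigl(2\lambda+\log(1+\lambda t)\bigr)^{-i}\bigl(\lambda+\log(1+\lambda t)\bigr)^{-(r-i)}\right)F, \] where, for $1\le r\le N$ and $0\le i\le r$, \[ a^{(\lambda)}_{i,r-i}(N,x)=(-1)^{N+i-r}\, i!\, S_{1,i-1}(r-i)\,(N-1)!\,H_{N-1,r-1}\,(x)_{r-i}. \]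
   Context: $(x)_0=1$ and $(x)_n=x(x-1)\cdots(x-n+1)$ for $n\ge1$. Generalized harmonic numbers: $H_{N,0}=1$ for all integers $N\ge 0$; $H_{N,1}=1+\frac12+\cdots+\frac1N$ for $N\ge1$; and for $2\le j\le N$, $H_{N,j}=\frac{H_{N-1,j-1}}{N}+\frac{H_{N-2,j-1}}{N-1}+\cdots+\frac{H_{j-1,j-1}}{j}$. Generalized Changhee power sums (for $k=1$), for integers $N\ge0$: $S_{1,-1}(N)=1$, $S_{1,0}(N)=N+1$, $S_{1,j}(N)=\sum_{l=0}^{N}S_{1,j-1}(l)$ for $j\ge1$. *)

theory Defs
  imports "HOL-Analysis.Analysis"
begin

definition falling :: "real \<Rightarrow> nat \<Rightarrow> real" where
  "falling x n = (\<Prod>k<n. x - real k)"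

fun genH :: "nat \<Rightarrow> nat \<Rightarrow> real" where
  "genH N 0 = 1"
| "genH N (Suc j) = (\<Sum>m\<in>{Suc j..N}. genH (m - 1) j / real m)"

text \<open>Generalized Changhee power sums, index shifted by one:
  changheeS j N = S_{1,j-1}(N).\<close>
fun changheeS :: "nat \<Rightarrow> nat \<Rightarrow> nat" where
  "changheeS 0 N = 1"
| "changheeS (Suc 0) N = N + 1"
| "changheeS (Suc (Suc j)) N = (\<Sum>l\<le>N. changheeS (Suc j) l)"

definition coeffA :: "nat \<Rightarrow> nat \<Rightarrow> nat \<Rightarrow> real \<Rightarrow> real" where
  "coeffA i r N x = (-1) ^ (N + i - r) * fact i * real (changheeS i (r - i))
      * fact (N - 1) * genH (N - 1) (r - 1) * falling x (r - i)"

definition Ffun :: "real \<Rightarrow> real \<Rightarrow> real \<Rightarrow> real" where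
  "Ffun x lam t = 2 * lam / (2 * lam + ln (1 + lam * t))
      * (1 + ln (1 + lam * t) / lam) powr x"

end

theory Submission
  imports Defs
begin

lemma changheeS_binom: "changheeS i j = (i + j) choose i"
proof (induction i j rule: changheeS.induct)
  case (3 i N)
  have "(\<Sum>l\<le>N. changheeS (Suc i) l) = (\<Sum>l\<le>N. (Suc i + l) choose l)"
    using 3 by (intro sum.cong refl) (metis add_Suc binomial_symmetric diff_add_inverse le_add1)
  also have "\<dots> = Suc (Suc i + N) choose N" by (rule sum_choose_lower)
  also have "\<dots> = (Suc (Suc i) + N) choose Suc (Suc i)"
    by (subst binomial_symmetric) auto
  finally show ?case by simp
qed auto

lemma genH_zero: "j > n \<Longrightarrow> genH n j = 0"
  by (cases j) auto

lemma genH_rec: "genH (Suc m) (Suc j) = genH m (Suc j) + genH m j / real (Suc m)"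
  by (auto simp: genH_zero)

definition cS :: "nat \<Rightarrow> nat \<Rightarrow> real" where
  "cS N r = (-1) ^ (N - r) * fact (N - 1) * genH (N - 1) (r - 1)"

lemma aux_ring: fixes a b c f m w :: real
  assumes "a + m * a = b + (c + m * c)"
  shows "f * (b * w) + (f * (c * w) + f * (m * (c * w))) = f * (a * w) + f * (m * (a * w))"
proof -
  have "f * w * (a + m * a) = f * w * (b + (c + m * c))" using assms by simp
  then show ?thesis by (simp add: algebra_simps)
qed

lemma cS_rec:
  assumes "N \<ge> 1" "1 \<le> r" "r \<le> Suc N"
  shows "cS (Suc N) r = (if r \<ge> 2 then cS N (r - 1) else 0) - real N * cS N r"
proof -
  obtain m where m: "N = Suc m" using assms by (cases N) auto
  show ?thesis
  proof (cases "r \<ge> 2")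
    case True
    then obtain j where j: "r = Suc (Suc j)" by (metis Suc_diff_Suc add_2_eq_Suc le_add_diff_inverse numeral_2_eq_2)
    have g: "genH (Suc m) (Suc j) = genH m (Suc j) + genH m j / real (Suc m)" by (rule genH_rec)
    have s1: "(-1::real) ^ (Suc N - r) = - ((-1) ^ (N - r))" if "r \<le> N"
      using that by (simp add: Suc_diff_le)
    show ?thesis
    proof (cases "r = Suc N")
      case True
      then have "genH m (Suc j) = 0" using m j by (simp add: genH_zero del: genH.simps)
      then show ?thesis using m j True g
        by (simp add: cS_def fact_Suc field_simps del: genH.simps) (metis distrib_left mult.assoc)
    next
      case False
      then have "Suc N - r = Suc (N - r)" using assms by auto
      then show ?thesis using m j True g
        by (simp add: cS_def fact_Suc field_simps del: genH.simps) (rule aux_ring)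
    qed
  next
    case False
    then have "r = 1" using assms by auto
    then show ?thesis using m by (simp add: cS_def fact_Suc field_simps)
  qed
qed

lemma cS_top: "N \<ge> 1 \<Longrightarrow> cS N (Suc N) = 0"
  by (simp add: cS_def genH_zero del: genH.simps)

lemma stirling_sum:
  fixes \<Phi> :: "nat \<Rightarrow> real"
  assumes "N \<ge> 1"
  shows "(\<Sum>r=1..Suc N. cS (Suc N) r * \<Phi> r)
       = (\<Sum>r=1..N. cS N r * \<Phi> (Suc r)) - real N * (\<Sum>r=1..N. cS N r * \<Phi> r)"
proof -
  define d where "d r = (if r \<ge> 2 then cS N (r - 1) else 0)" for r
  have "(\<Sum>r=1..Suc N. cS (Suc N) r * \<Phi> r) = (\<Sum>r=1..Suc N. d r * \<Phi> r - real N * (cS N r * \<Phi> r))"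
    using assms by (intro sum.cong refl) (simp add: cS_rec d_def algebra_simps)
  also have "\<dots> = (\<Sum>r=1..Suc N. d r * \<Phi> r) - real N * (\<Sum>r=1..Suc N. cS N r * \<Phi> r)"
    by (simp add: sum_subtractf sum_distrib_left del: sum.cl_ivl_Suc)
  also have "(\<Sum>r=1..Suc N. cS N r * \<Phi> r) = (\<Sum>r=1..N. cS N r * \<Phi> r)"
    using assms by (simp add: cS_top)
  also have "(\<Sum>r=1..Suc N. d r * \<Phi> r) = d 1 * \<Phi> 1 + (\<Sum>r=Suc 1..Suc N. d r * \<Phi> r)"
    by (rule sum.atLeast_Suc_atMost) simp
  also have "(\<Sum>r=Suc 1..Suc N. d r * \<Phi> r) = (\<Sum>r=1..N. d (Suc r) * \<Phi> (Suc r))"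
    by (rule sum.shift_bounds_cl_Suc_ivl)
  also have "\<dots> = (\<Sum>r=1..N. cS N r * \<Phi> (Suc r))"
    by (intro sum.cong refl) (simp add: d_def)
  finally show ?thesis by (simp add: d_def)
qed

lemma leibniz_step:
  fixes f g :: "nat \<Rightarrow> real \<Rightarrow> real"
  assumes f: "\<And>k. (f k has_real_derivative f (Suc k) u) (at u)"
      and g: "\<And>k. (g k has_real_derivative g (Suc k) u) (at u)"
  shows "((\<lambda>u. \<Sum>i\<le>r. real (r choose i) * f i u * g (r - i) u) has_real_derivative
           (\<Sum>i\<le>Suc r. real (Suc r choose i) * f i u * g (Suc r - i) u)) (at u)"
proof -
  have D: "((\<lambda>u. \<Sum>i\<le>r. real (r choose i) * f i u * g (r - i) u) has_real_derivative
           (\<Sum>i\<le>r. real (r choose i) * (f (Suc i) u * g (r - i) u + f i u * g (Suc (r - i)) u))) (at u)"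
  proof (rule DERIV_sum)
    fix i assume "i \<in> {..r}"
    have "((\<lambda>u. real (r choose i) * (f i u * g (r - i) u)) has_real_derivative
        real (r choose i) * (f (Suc i) u * g (r - i) u + f i u * g (Suc (r - i)) u)) (at u)"
      using DERIV_cmult[OF DERIV_mult[OF f[of i] g[of "r-i"]], of "real (r choose i)"]
      by (simp add: algebra_simps)
    then show "((\<lambda>u. real (r choose i) * f i u * g (r - i) u) has_real_derivative
        real (r choose i) * (f (Suc i) u * g (r - i) u + f i u * g (Suc (r - i)) u)) (at u)"
      by (simp add: mult.assoc)
  qed
  have e1: "(\<Sum>i\<le>Suc r. real (Suc r choose i) * f i u * g (Suc r - i) u)
     = f 0 u * g (Suc r) u + (\<Sum>i\<le>r. real (r choose i) * f (Suc i) u * g (r - i) u)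
         + (\<Sum>i\<le>r. real (r choose Suc i) * f (Suc i) u * g (r - i) u)"
    by (simp add: sum.atMost_Suc_shift sum.distrib algebra_simps del: sum.atMost_Suc)
  have e2: "(\<Sum>i\<le>r. real (r choose i) * f i u * g (Suc (r - i)) u)
       = (\<Sum>i\<le>Suc r. real (r choose i) * f i u * g (Suc r - i) u)"
    by (simp add: Suc_diff_le)
  also have "\<dots> = f 0 u * g (Suc r) u + (\<Sum>i\<le>r. real (r choose Suc i) * f (Suc i) u * g (r - i) u)"
    by (simp add: sum.atMost_Suc_shift del: sum.atMost_Suc)
  finally have e2': "(\<Sum>i\<le>r. real (r choose i) * f i u * g (Suc (r - i)) u) = \<dots>" .
  have "(\<Sum>i\<le>r. real (r choose i) * (f (Suc i) u * g (r - i) u + f i u * g (Suc (r - i)) u))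
      = (\<Sum>i\<le>r. real (r choose i) * f (Suc i) u * g (r - i) u) + (\<Sum>i\<le>r. real (r choose i) * f i u * g (Suc (r - i)) u)"
    by (simp add: sum.distrib algebra_simps)
  with e1 e2' have "(\<Sum>i\<le>r. real (r choose i) * (f (Suc i) u * g (r - i) u + f i u * g (Suc (r - i)) u))
     = (\<Sum>i\<le>Suc r. real (Suc r choose i) * f i u * g (Suc r - i) u)" by linarith
  then show ?thesis using DERIV_cong[OF D] by blast
qed

definition fa :: "real \<Rightarrow> nat \<Rightarrow> real \<Rightarrow> real" where
  "fa lam k u = 2 * lam * (-1) ^ k * fact k / (2 * lam + u) ^ Suc k"

definition ga :: "real \<Rightarrow> real \<Rightarrow> nat \<Rightarrow> real \<Rightarrow> real" where
  "ga lam x k u = falling x k / (lam + u) ^ k * (1 + u / lam) powr x"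

definition Phi :: "real \<Rightarrow> real \<Rightarrow> nat \<Rightarrow> real \<Rightarrow> real" where
  "Phi lam x r u = (\<Sum>i\<le>r. real (r choose i) * fa lam i u * ga lam x (r - i) u)"

lemma fa_deriv:
  assumes "2 * lam + u \<noteq> 0"
  shows "(fa lam k has_real_derivative fa lam (Suc k) u) (at u)"
proof -
  define a where "a = 2 * lam + u"
  have a: "a \<noteq> 0" using assms by (simp add: a_def)
  have d1: "((\<lambda>u. (2 * lam + u) ^ Suc k) has_real_derivative real (Suc k) * a ^ k) (at u)"
    using DERIV_power[OF DERIV_add[OF DERIV_const[of "2*lam"] DERIV_ident], of "Suc k" u]
    by (simp add: a_def)
  have d2: "((\<lambda>u. 2 * lam * (-1) ^ k * fact k * inverse ((2 * lam + u) ^ Suc k)) has_real_derivative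
      2 * lam * (-1) ^ k * fact k * (- (real (Suc k) * a ^ k * inverse ((a ^ Suc k) ^ Suc (Suc 0))))) (at u)"
    by (intro DERIV_cmult DERIV_inverse_fun[OF d1, unfolded a_def[symmetric]]) (use a in simp)
  have e: "2 * lam * (-1) ^ k * fact k * (- (real (Suc k) * a ^ k * inverse ((a ^ Suc k) ^ Suc (Suc 0))))
     = fa lam (Suc k) u"
  proof -
    have "(a ^ Suc k) ^ Suc (Suc 0) = a ^ k * a ^ Suc (Suc k)" by (simp add: power_Suc power2_eq_square algebra_simps)
    then show ?thesis using a unfolding fa_def a_def[symmetric] by (simp add: fact_Suc field_simps)
  qed
  have "((\<lambda>u. 2 * lam * (-1) ^ k * fact k / (2 * lam + u) ^ Suc k) has_real_derivative
     fa lam (Suc k) u) (at u)"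
    using d2 e by (simp add: divide_inverse)
  then show ?thesis unfolding fa_def[abs_def] .
qed

lemma falling_Suc: "falling x (Suc k) = falling x k * (x - real k)"
  by (simp add: falling_def)

lemma ga_deriv:
  assumes "lam \<noteq> 0" "1 + u / lam > 0"
  shows "(ga lam x k has_real_derivative ga lam x (Suc k) u) (at u)"
proof -
  define b where "b = lam + u"
  define p where "p = (1 + u / lam) powr x"
  have bl: "b = (1 + u / lam) * lam" using assms by (simp add: b_def field_simps)
  have b: "b \<noteq> 0" using assms bl by auto
  have q: "(1 + u / lam) powr (x - 1) = p / (1 + u / lam)"
    using assms by (simp add: p_def powr_diff)
  have dP: "((\<lambda>u. (1 + u / lam) powr x) has_real_derivative x * (1 + u / lam) powr (x - 1) * (1 / lam)) (at u)"
    using assms by (auto intro!: derivative_eq_intros)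
  have d1: "((\<lambda>u. (lam + u) ^ k) has_real_derivative real k * b ^ (k - Suc 0)) (at u)"
    using DERIV_power[OF DERIV_add[OF DERIV_const[of "lam"] DERIV_ident], of k u]
    by (simp add: b_def)
  have dI: "((\<lambda>u. inverse ((lam + u) ^ k)) has_real_derivative
      - (real k * b ^ (k - Suc 0) * inverse ((b ^ k) ^ Suc (Suc 0)))) (at u)"
    by (intro DERIV_inverse_fun[OF d1, unfolded b_def[symmetric]]) (use b in simp)
  have D: "((\<lambda>u. falling x k * (inverse ((lam + u) ^ k) * (1 + u / lam) powr x)) has_real_derivative
     falling x k * (- (real k * b ^ (k - Suc 0) * inverse ((b ^ k) ^ Suc (Suc 0))) * p
        + x * (1 + u / lam) powr (x - 1) * (1 / lam) * inverse (b ^ k))) (at u)"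
    using DERIV_cmult[OF DERIV_mult[OF dI dP], of "falling x k"] by (simp add: p_def b_def)
  have kb: "real k * b ^ (k - Suc 0) * b = real k * b ^ k" by (cases k) auto
  have e: "falling x k * (- (real k * b ^ (k - Suc 0) * inverse ((b ^ k) ^ Suc (Suc 0))) * p
        + x * (1 + u / lam) powr (x - 1) * (1 / lam) * inverse (b ^ k)) = ga lam x (Suc k) u"
  proof -
    have e0: "ga lam x (Suc k) u = falling x k * (x - real k) / b ^ Suc k * p"
      by (simp add: ga_def falling_Suc b_def p_def)
    have e1: "- (real k * b ^ (k - Suc 0) * inverse ((b ^ k) ^ Suc (Suc 0))) = - real k / b ^ Suc k"
      using b kb by (simp add: field_simps power_Suc power2_eq_square)
    have e2: "x * (1 + u / lam) powr (x - 1) * (1 / lam) * inverse (b ^ k) = x * p / b ^ Suc k"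
    proof -
      have "x * (1 + u / lam) powr (x - 1) * (1 / lam) * inverse (b ^ k) = x * p / (((1 + u / lam) * lam) * b ^ k)"
        unfolding q by (simp add: field_simps)
      also have "\<dots> = x * p / b ^ Suc k" by (simp flip: bl)
      finally show ?thesis .
    qed
    show ?thesis unfolding e0 e1 e2 using b by (simp add: field_simps)
  qed
  have "((\<lambda>u. falling x k / (lam + u) ^ k * (1 + u / lam) powr x) has_real_derivative
     ga lam x (Suc k) u) (at u)"
    using D e by (simp add: divide_inverse mult.assoc)
  then show ?thesis unfolding ga_def[abs_def] .
qed

lemma Phi_deriv:
  assumes "lam \<noteq> 0" "1 + u / lam > 0" "2 * lam + u \<noteq> 0"
  shows "(Phi lam x r has_real_derivative Phi lam x (Suc r) u) (at u)"
  using leibniz_step[of "fa lam" u "ga lam x" r] fa_deriv[OF assms(3)] ga_deriv[OF assms(1,2)]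
  unfolding Phi_def[abs_def] by blast

lemma Ffun_Phi: "Ffun x lam t = Phi lam x 0 (ln (1 + lam * t))"
  by (simp add: Ffun_def Phi_def fa_def ga_def falling_def)

lemma good_nhds:
  fixes lam :: real
  assumes "lam \<noteq> 0"
  shows "\<forall>\<^sub>F t in nhds 0. 1 + lam * t > 0 \<and> 2 * lam + ln (1 + lam * t) \<noteq> 0
            \<and> 1 + ln (1 + lam * t) / lam > 0"
proof -
  have c1: "continuous (at 0) (\<lambda>t::real. 1 + lam * t)" by (intro continuous_intros)
  have c2: "continuous (at 0) (\<lambda>t::real. ln (1 + lam * t))" by (intro continuous_intros) auto
  obtain d1 where d1: "d1 > 0" "\<And>t. dist t 0 < d1 \<Longrightarrow> dist (1 + lam * t) (1 + lam * 0) < 1/2"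
    using c1[unfolded continuous_at_eps_delta, rule_format, of "1/2"] by auto
  obtain d2 where d2: "d2 > 0" "\<And>t. dist t 0 < d2 \<Longrightarrow> dist (ln (1 + lam * t)) (ln (1 + lam * 0)) < \<bar>lam\<bar>/2"
    using c2[unfolded continuous_at_eps_delta, rule_format, of "\<bar>lam\<bar>/2"] assms by auto
  show ?thesis unfolding eventually_nhds_metric
  proof (intro exI[of _ "min d1 d2"] conjI allI impI)
    show "min d1 d2 > 0" using d1 d2 by simp
    fix t :: real assume t: "dist t 0 < min d1 d2"
    have a: "\<bar>lam * t\<bar> < 1/2" using d1(2)[of t] t by (simp add: dist_real_def)
    have b: "\<bar>ln (1 + lam * t)\<bar> < \<bar>lam\<bar>/2" using d2(2)[of t] t by (simp add: dist_real_def)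
    show "1 + lam * t > 0" using a by linarith
    show "2 * lam + ln (1 + lam * t) \<noteq> 0" using b assms by linarith
    have "\<bar>ln (1 + lam * t) / lam\<bar> < 1/2" using b assms by (simp add: abs_divide field_simps)
    then show "1 + ln (1 + lam * t) / lam > 0" by linarith
  qed
qed

definition G :: "real \<Rightarrow> real \<Rightarrow> nat \<Rightarrow> real \<Rightarrow> real" where
  "G lam x N t = (lam / (1 + lam * t)) ^ N * (\<Sum>r=1..N. cS N r * Phi lam x r (ln (1 + lam * t)))"

lemma alg_aux0: fixes p w n A B wS wN :: real
  assumes "p * w ^ 2 = wS" "wS = w * wN"
  shows "n * (- (w ^ 2) * p) * A + w * B * wN = wS * (B - n * A)"
  using assms by algebra

lemma alg_aux: fixes p w n A B :: real
  assumes "p * w ^ 2 = w ^ Suc N"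
  shows "n * (- (w ^ 2) * p) * A + w * B * w ^ N = w ^ Suc N * (B - n * A)"
  by (rule alg_aux0[OF assms]) simp

lemma G_deriv:
  assumes lam: "lam \<noteq> 0" and t: "1 + lam * t > 0" "2 * lam + ln (1 + lam * t) \<noteq> 0"
      "1 + ln (1 + lam * t) / lam > 0" and N: "N \<ge> 1"
  shows "(G lam x N has_real_derivative G lam x (Suc N) t) (at t)"
proof -
  define w where "w = lam / (1 + lam * t)"
  define L where "L = ln (1 + lam * t)"
  have dL: "((\<lambda>t. ln (1 + lam * t)) has_real_derivative w) (at t)"
    using t by (auto intro!: derivative_eq_intros simp: w_def field_simps)
  have dPhi: "((\<lambda>t. Phi lam x r (ln (1 + lam * t))) has_real_derivative Phi lam x (Suc r) L * w) (at t)" for r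
  proof -
    have pd: "(Phi lam x r has_real_derivative Phi lam x (Suc r) L) (at (ln (1 + lam * t)))"
      using Phi_deriv[OF lam, of L] t by (simp add: L_def)
    show ?thesis using DERIV_chain2[OF pd dL] .
  qed
  have dw: "((\<lambda>t. lam / (1 + lam * t)) has_real_derivative - (w ^ 2)) (at t)"
    using t by (auto intro!: derivative_eq_intros simp: w_def field_simps power2_eq_square)
  have dwN: "((\<lambda>t. (lam / (1 + lam * t)) ^ N) has_real_derivative real N * (- (w ^ 2) * w ^ (N - Suc 0))) (at t)"
    using DERIV_power[OF dw, of N] unfolding w_def .
  have dS: "((\<lambda>t. \<Sum>r=1..N. cS N r * Phi lam x r (ln (1 + lam * t))) has_real_derivative
      (\<Sum>r=1..N. cS N r * (Phi lam x (Suc r) L * w))) (at t)"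
    by (intro DERIV_sum DERIV_cmult dPhi)
  have D: "(G lam x N has_real_derivative
      real N * (- (w ^ 2) * w ^ (N - Suc 0)) * (\<Sum>r=1..N. cS N r * Phi lam x r L)
      + (\<Sum>r=1..N. cS N r * (Phi lam x (Suc r) L * w)) * w ^ N) (at t)"
    using DERIV_mult[OF dwN dS] unfolding G_def[abs_def] L_def w_def .
  have wN: "w ^ (N - Suc 0) * w ^ 2 = w ^ Suc N" using N
    by (cases N) (auto simp: power2_eq_square)
  have s1: "(\<Sum>r=1..N. cS N r * (Phi lam x (Suc r) L * w)) = w * (\<Sum>r=1..N. cS N r * Phi lam x (Suc r) L)"
    by (simp add: sum_distrib_left algebra_simps del: sum.cl_ivl_Suc)
  have "real N * (- (w ^ 2) * w ^ (N - Suc 0)) * (\<Sum>r=1..N. cS N r * Phi lam x r L)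
      + (\<Sum>r=1..N. cS N r * (Phi lam x (Suc r) L * w)) * w ^ N
    = w ^ Suc N * ((\<Sum>r=1..N. cS N r * Phi lam x (Suc r) L) - real N * (\<Sum>r=1..N. cS N r * Phi lam x r L))"
    unfolding s1 by (rule alg_aux) (use wN in simp)
  also have "\<dots> = G lam x (Suc N) t"
    unfolding G_def stirling_sum[OF N] w_def L_def ..
  finally show ?thesis using D by simp
qed

lemma term_eq:
  assumes A: "2 * lam + L \<noteq> 0" and ir: "i \<le> r" "r \<le> N"
  shows "cS N r * (real (r choose i) * fa lam i L * ga lam x (r - i) L)
    = coeffA i r N x / (2 * lam + L) ^ i / (lam + L) ^ (r - i)
        * (2 * lam / (2 * lam + L) * (1 + L / lam) powr x)"
proof -
  have ch: "real (changheeS i (r - i)) = real (r choose i)" using ir by (simp add: changheeS_binom)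
  have sg: "(-1::real) ^ (N + i - r) = (-1) ^ (N - r) * (-1) ^ i"
    using ir by (simp add: power_add[symmetric])
  show ?thesis
    unfolding coeffA_def cS_def fa_def ga_def ch sg using A
    by (simp add: field_simps power_Suc)
qed

lemma G_eq:
  assumes A: "2 * lam + ln (1 + lam * t) \<noteq> 0"
  shows "G lam x N t = lam ^ N / (1 + lam * t) ^ N *
      (\<Sum>r=1..N. \<Sum>i=0..r. coeffA i r N x
          / (2 * lam + ln (1 + lam * t)) ^ i
          / (lam + ln (1 + lam * t)) ^ (r - i))
      * Ffun x lam t"
proof -
  define L where "L = ln (1 + lam * t)"
  have "(\<Sum>r=1..N. cS N r * Phi lam x r L) = (\<Sum>r=1..N. \<Sum>i=0..r. coeffA i r N x
          / (2 * lam + L) ^ i / (lam + L) ^ (r - i) * (2 * lam / (2 * lam + L) * (1 + L / lam) powr x))"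
    unfolding Phi_def sum_distrib_left atMost_atLeast0
    apply (intro sum.cong refl)
    apply (rule term_eq[OF A[folded L_def]])
    by auto
  also have "\<dots> = (\<Sum>r=1..N. \<Sum>i=0..r. coeffA i r N x
          / (2 * lam + L) ^ i / (lam + L) ^ (r - i)) * (2 * lam / (2 * lam + L) * (1 + L / lam) powr x)"
    by (simp only: sum_distrib_right)
  finally show ?thesis
    unfolding G_def Ffun_def L_def[symmetric] power_divide by (simp only: mult.assoc)
qed

lemma main_ind:
  assumes lam: "lam \<noteq> 0" and S: "open S"
    and good: "\<And>t. t \<in> S \<Longrightarrow> 1 + lam * t > 0 \<and> 2 * lam + ln (1 + lam * t) \<noteq> 0
            \<and> 1 + ln (1 + lam * t) / lam > 0"
  shows "\<forall>t\<in>S. (deriv ^^ Suc n) (Ffun x lam) t = G lam x (Suc n) t"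
proof (induction n)
  case 0
  show ?case
  proof
    fix t assume t: "t \<in> S"
    define w where "w = lam / (1 + lam * t)"
    define L where "L = ln (1 + lam * t)"
    have dL: "((\<lambda>t. ln (1 + lam * t)) has_real_derivative w) (at t)"
      using good[OF t] by (auto intro!: derivative_eq_intros simp: w_def field_simps)
    have pd: "(Phi lam x 0 has_real_derivative Phi lam x (Suc 0) L) (at (ln (1 + lam * t)))"
      using Phi_deriv[OF lam, of L] good[OF t] by (simp add: L_def)
    have F: "Ffun x lam = (\<lambda>t. Phi lam x 0 (ln (1 + lam * t)))"
      by (rule ext) (rule Ffun_Phi)
    have "deriv (Ffun x lam) t = Phi lam x (Suc 0) L * w"
      unfolding F by (rule DERIV_imp_deriv[OF DERIV_chain2[OF pd dL]])
    then show "(deriv ^^ Suc 0) (Ffun x lam) t = G lam x (Suc 0) t"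
      by (simp add: G_def cS_def w_def L_def)
  qed
next
  case (Suc n)
  show ?case
  proof
    fix t assume t: "t \<in> S"
    have ev: "\<forall>\<^sub>F y in nhds t. (deriv ^^ Suc n) (Ffun x lam) y = G lam x (Suc n) y"
      unfolding eventually_nhds using S t Suc by blast
    have "(deriv ^^ Suc (Suc n)) (Ffun x lam) t = deriv ((deriv ^^ Suc n) (Ffun x lam)) t" by simp
    also have "\<dots> = deriv (G lam x (Suc n)) t" by (rule deriv_cong_ev[OF ev refl])
    also have "\<dots> = G lam x (Suc (Suc n)) t"
      using good[OF t] by (intro DERIV_imp_deriv G_deriv lam) auto
    finally show "(deriv ^^ Suc (Suc n)) (Ffun x lam) t = G lam x (Suc (Suc n)) t" .
  qed
qed

theorem theorem3:
  fixes lam x :: real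
  assumes "lam \<noteq> 0"
  shows "\<forall>\<^sub>F t in nhds 0. \<forall>N::nat. N \<ge> 1 \<longrightarrow>
    (deriv ^^ N) (Ffun x lam) t =
      lam ^ N / (1 + lam * t) ^ N *
      (\<Sum>r=1..N. \<Sum>i=0..r. coeffA i r N x
          / (2 * lam + ln (1 + lam * t)) ^ i
          / (lam + ln (1 + lam * t)) ^ (r - i))
      * Ffun x lam t"
proof -
  obtain S where S: "open S" "0 \<in> S" and good: "\<And>t. t \<in> S \<Longrightarrow> 1 + lam * t > 0 \<and> 2 * lam + ln (1 + lam * t) \<noteq> 0
            \<and> 1 + ln (1 + lam * t) / lam > 0"
    using good_nhds[OF assms] unfolding eventually_nhds by blast
  show ?thesis unfolding eventually_nhds
  proof (intro exI[of _ S] conjI S ballI allI impI)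
    fix t and N :: nat assume t: "t \<in> S" and N: "N \<ge> 1"
    then obtain n where n: "N = Suc n" by (cases N) auto
    have "(deriv ^^ N) (Ffun x lam) t = G lam x N t"
      using main_ind[OF assms S(1) good, of n x] t n by blast
    then show "(deriv ^^ N) (Ffun x lam) t =
      lam ^ N / (1 + lam * t) ^ N *
      (\<Sum>r=1..N. \<Sum>i=0..r. coeffA i r N x
          / (2 * lam + ln (1 + lam * t)) ^ i
          / (lam + ln (1 + lam * t)) ^ (r - i))
      * Ffun x lam t" using good[OF t] G_eq by simp
  qed
qed

end
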